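(* Let $\alpha$ be a countable ordinal. For all $e,k\in\mathbb N$, all tuples $\vec a$ of natural numbers and all $b\in\mathbb N$, the set $$\{\vec f\in(\mathbb N^{\mathbb N})^k : \|\langle e,\vec a,\vec f,b\rangle\|_{\Omega_{\mathbf S}}<\alpha\}$$ is a Suslin set (a subset of $(\mathbb N^{\mathbb N})^k$).
   Context: The Suslin functional: $\mathbf S(g)=0$ if $\forall f\in\mathbb N^{\mathbb N}\exists n\,g(\bar f(n))=0$, and $1$ if $\exists f\forall n\,g(\bar f(n))>0$, $\bar f(n)=\langle f(0),\dots,f(n-1)\rangle$. $\Omega_{\mathbf S}$ is the set of tuples $\langle e,\vec a,\vec f,b\rangle$ with $\{e\}(\mathbf S,\vec a,\vec f)=b$ in the sense of Kleene computability (schemes S1–S9, arguments ordered as: $\mathbf S$, integers, functions), and $\|\cdot\|_{\Omega_{\mathbf S}}$ is the ordinal rank of the (well-founded) computation tree of the tuple; for tuples not in $\Omega_{\mathbf S}$ the condition $\|\cdot\|<\alpha$ is false. Suslin sets in $X=(\mathbb N^{\mathbb N})^k$: a Suslin scheme is $s\mapsto P_s\subseteq X$ on the set $\mathrm{SEQ}$ of finite sequences of naturals, $\mathbf A(\mathbf P)=\bigcup_f\bigcap_n P_{\bar f(n)}$; $\Sigma_0$ clopen sets; $\Sigma_\beta$ ($\beta>0$) sets $\mathbf A(\mathbf P)$ with each $P_s\in\Pi_\gamma$, some $\gamma<\beta$; $\Pi_\beta$ complements; Suslin sets $=\bigcup_{\beta<\omega_1}\Sigma_\beta$. *)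

theory Defs
  imports Main "HOL-Library.Nat_Bijection"
begin

text \<open>Code of the finite sequence f(0),...,f(n-1) (the paper's bar f(n)); SEQ is coded
  by the bijection list_encode between nat lists and nat.\<close>
definition seqcode :: "(nat \<Rightarrow> nat) \<Rightarrow> nat \<Rightarrow> nat" where
  "seqcode f n = list_encode (map f [0..<n])"

definition Sfun :: "(nat \<Rightarrow> nat) \<Rightarrow> nat" where
  "Sfun g = (if (\<forall>f::nat \<Rightarrow> nat. \<exists>n. g (seqcode f n) = 0) then 0 else 1)"

text \<open>A computation tuple (e, as, fs, b) stands for  {e}(S, as, fs) = b :
  as are the integer arguments, fs the function arguments.
  Indices are codes (via list_encode) of lists beginning with the scheme number,
  the number n of integer arguments and the number k of function arguments.\<close>

type_synonym comp = "nat \<times> nat list \<times> (nat \<Rightarrow> nat) list \<times> nat"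

definition swap_list :: "nat \<Rightarrow> nat \<Rightarrow> 'a list \<Rightarrow> 'a list" where
  "swap_list i j xs = xs[i := xs ! j, j := xs ! i]"

definition step :: "(comp \<Rightarrow> bool) \<Rightarrow> comp \<Rightarrow> bool" where
  "step P x \<longleftrightarrow> (case x of (e, as, fs, b) \<Rightarrow>
     let n = length as; k = length fs in
     \<comment> \<open>S1: successor\<close>
     (e = list_encode [1, n, k] \<and> n \<ge> 1 \<and> b = Suc (as ! 0))
     \<comment> \<open>S2: constants\<close>
   \<or> (\<exists>q. e = list_encode [2, n, k, q] \<and> b = q)
     \<comment> \<open>S3: identity (first argument)\<close>
   \<or> (e = list_encode [3, n, k] \<and> n \<ge> 1 \<and> b = as ! 0)
     \<comment> \<open>S4: composition {e}(a,f) = {e1}({e2}(a,f), a, f)\<close>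
   \<or> (\<exists>e1 e2 c. e = list_encode [4, n, k, e1, e2] \<and>
        P (e2, as, fs, c) \<and> P (e1, c # as, fs, b))
     \<comment> \<open>S5: primitive recursion on the first argument\<close>
   \<or> (\<exists>e1 e2 as'. e = list_encode [5, n, k, e1, e2] \<and> as = 0 # as' \<and> P (e1, as', fs, b))
   \<or> (\<exists>e1 e2 m as' c. e = list_encode [5, n, k, e1, e2] \<and> as = Suc m # as' \<and>
        P (e, m # as', fs, c) \<and> P (e2, c # m # as', fs, b))
     \<comment> \<open>S6: permutation (swap) of integer arguments, resp. of function arguments\<close>
   \<or> (\<exists>i j e1. e = list_encode [6, n, k, 0, i, j, e1] \<and> i < n \<and> j < n \<and>
        P (e1, swap_list i j as, fs, b))
   \<or> (\<exists>i j e1. e = list_encode [6, n, k, 1, i, j, e1] \<and> i < k \<and> j < k \<and>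
        P (e1, as, swap_list i j fs, b))
     \<comment> \<open>S7: application of the first function argument to the first integer argument\<close>
   \<or> (e = list_encode [7, n, k] \<and> n \<ge> 1 \<and> k \<ge> 1 \<and> b = (fs ! 0) (as ! 0))
     \<comment> \<open>S8: application of S: {e}(a,f) = S(\<lambda>t. {e1}(t,a,f)), which must be total\<close>
   \<or> (\<exists>e1 g. e = list_encode [8, n, k, e1] \<and> (\<forall>t. P (e1, t # as, fs, g t)) \<and> b = Sfun g)
     \<comment> \<open>S9: enumeration {e}(d, a1..an', f) = {d}(a1..am, f), m \<le> n'\<close>
   \<or> (\<exists>m d as'. e = list_encode [9, n, k, m] \<and> as = d # as' \<and> m \<le> length as' \<and>
        P (d, take m as', fs, b)))"

lemma step_mono [mono]: "(\<And>y. P y \<longrightarrow> Q y) \<Longrightarrow> step P x \<longrightarrow> step Q x"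
  unfolding step_def split_beta Let_def by (intro impI) (elim disjE; meson)

text \<open>Omega_S: the least fixed point, i.e. the set of all convergent computations.\<close>
inductive omegaS :: "comp \<Rightarrow> bool" where
  "step omegaS x \<Longrightarrow> omegaS x"

text \<open>Countable ordinals are represented by well-orders on (subsets of) nat;
  the order type of the initial segment strictly below a point xi of the field of
  alpha is the ordinal |xi|_alpha. comp_rank_le alpha xi x means: x is in Omega_S and the
  ordinal rank of its computation tree (rank = sup of (rank of child + 1)) is at most
  |xi|_alpha, i.e. every immediate subcomputation has rank at most |eta|_alpha for
  some eta strictly below xi.\<close>
inductive comp_rank_le :: "nat rel \<Rightarrow> nat \<Rightarrow> comp \<Rightarrow> bool" for \<alpha> where
  "\<xi> \<in> Field \<alpha> \<Longrightarrow>
   step (\<lambda>y. \<exists>\<eta>. (\<eta>, \<xi>) \<in> \<alpha> \<and> \<eta> \<noteq> \<xi> \<and> comp_rank_le \<alpha> \<eta> y) x \<Longrightarrow>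
   comp_rank_le \<alpha> \<xi> x"

text \<open>norm_less alpha x  means  ||x||_{Omega_S} < alpha (the order type of alpha);
  false for x not in Omega_S.\<close>
definition norm_less :: "nat rel \<Rightarrow> comp \<Rightarrow> bool" where
  "norm_less \<alpha> x \<longleftrightarrow> omegaS x \<and> (\<exists>\<xi> \<in> Field \<alpha>. comp_rank_le \<alpha> \<xi> x)"

definition space :: "nat \<Rightarrow> (nat \<Rightarrow> nat) list set" where
  "space k = {fs. length fs = k}"

text \<open>Open sets of the product (Baire) topology on (N^N)^k, N discrete.\<close>
definition baire_open :: "nat \<Rightarrow> (nat \<Rightarrow> nat) list set \<Rightarrow> bool" where
  "baire_open k A \<longleftrightarrow> A \<subseteq> space k \<and>
     (\<forall>fs \<in> A. \<exists>n. \<forall>gs \<in> space k. (\<forall>i<k. \<forall>m<n. (gs ! i) m = (fs ! i) m) \<longrightarrow> gs \<in> A)"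

definition clopen :: "nat \<Rightarrow> (nat \<Rightarrow> nat) list set \<Rightarrow> bool" where
  "clopen k A \<longleftrightarrow> baire_open k A \<and> baire_open k (space k - A)"

definition suslinA :: "(nat list \<Rightarrow> 'a set) \<Rightarrow> 'a set" where
  "suslinA P = (\<Union>f. \<Inter>n. P (map f [0..<n]))"

text \<open>Sigma k beta A: A is a Sigma_beta subset of (N^N)^k, beta a countable ordinal
  (well-order on nat; beta = {} is the ordinal 0). Pi_gamma sets are the complements
  (in (N^N)^k) of Sigma_gamma sets.\<close>
inductive Sigma_set :: "nat \<Rightarrow> nat rel \<Rightarrow> (nat \<Rightarrow> nat) list set \<Rightarrow> bool" for k where
  Sigma0: "Well_order \<beta> \<Longrightarrow> \<beta> = {} \<Longrightarrow> clopen k A \<Longrightarrow> Sigma_set k \<beta> A"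
| SigmaA: "Well_order \<beta> \<Longrightarrow> \<beta> \<noteq> {} \<Longrightarrow>
     (\<forall>s. P s \<subseteq> space k \<and> (\<exists>\<gamma>. (\<gamma>, \<beta>) \<in> ordLess \<and> Sigma_set k \<gamma> (space k - P s))) \<Longrightarrow>
     Sigma_set k \<beta> (suslinA P)"

definition Pi_set :: "nat \<Rightarrow> nat rel \<Rightarrow> (nat \<Rightarrow> nat) list set \<Rightarrow> bool" where
  "Pi_set k \<beta> A \<longleftrightarrow> A \<subseteq> space k \<and> Sigma_set k \<beta> (space k - A)"

definition suslin_set :: "nat \<Rightarrow> (nat \<Rightarrow> nat) list set \<Rightarrow> bool" where
  "suslin_set k A \<longleftrightarrow> (\<exists>\<beta>::nat rel. Well_order \<beta> \<and> Sigma_set k \<beta> A)"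

end

theory Submission
  imports Defs "HOL-Library.Countable"
begin


lemma wo_refl: "Well_order r \<Longrightarrow> x \<in> Field r \<Longrightarrow> (x,x) \<in> r"
  using wo_rel.REFL[OF wo_rel.intro] unfolding refl_on_def by blast
lemma wo_trans: "Well_order r \<Longrightarrow> (x,y) \<in> r \<Longrightarrow> (y,z) \<in> r \<Longrightarrow> (x,z) \<in> r"
  using wo_rel.TRANS[OF wo_rel.intro] unfolding trans_def by blast
lemma wo_antisym: "Well_order r \<Longrightarrow> (x,y) \<in> r \<Longrightarrow> (y,x) \<in> r \<Longrightarrow> x = y"
  using wo_rel.ANTISYM[OF wo_rel.intro] unfolding antisym_def by blast
lemma wo_total: "Well_order r \<Longrightarrow> x \<in> Field r \<Longrightarrow> y \<in> Field r \<Longrightarrow> (x,y) \<in> r \<or> (y,x) \<in> r"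
  using wo_rel.TOTALS[OF wo_rel.intro] by blast
lemma wo_wf: "Well_order r \<Longrightarrow> wf (r - Id)"
  using wo_rel.WF[OF wo_rel.intro] by blast

lemma wo_mono_self:
  assumes W: "Well_order r"
    and H: "\<And>x. x \<in> Field r \<Longrightarrow> h x \<in> Field r"
    and M: "\<And>x y. (x,y) \<in> r \<Longrightarrow> x \<noteq> y \<Longrightarrow> (h x, h y) \<in> r \<and> h x \<noteq> h y"
  shows "x \<in> Field r \<Longrightarrow> (x, h x) \<in> r"
proof (induction x rule: wf_induct[OF wo_wf[OF W]])
  case (1 x)
  show ?case
  proof (rule ccontr)
    assume n: "(x, h x) \<notin> r"
    have hx: "h x \<in> Field r" using H 1 by blast
    have t1: "(h x, x) \<in> r" using wo_total[OF W 1(2) hx] n by blast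
    have t2: "h x \<noteq> x" using n wo_refl[OF W 1(2)] by metis
    have "(h x, h (h x)) \<in> r" using 1(1) hx t1 t2 by blast
    moreover have "(h (h x), h x) \<in> r" "h (h x) \<noteq> h x" using M[OF t1 t2] by auto
    ultimately show False using wo_antisym[OF W] by blast
  qed
qed

definition idxlt :: "nat \<Rightarrow> nat \<Rightarrow> bool" where
  "idxlt i j \<longleftrightarrow> (j = 0 \<and> i \<noteq> 0) \<or> (0 < i \<and> i < j)"

definition sumW :: "(nat \<Rightarrow> nat rel) \<Rightarrow> (nat \<times> nat) rel" where
  "sumW C = {((i,x),(j,y)). x \<in> Field (C i) \<and> y \<in> Field (C j) \<and> (idxlt i j \<or> (i = j \<and> (x,y) \<in> C i))}"

lemma mem_sumW: "((i,x),(j,y)) \<in> sumW C \<longleftrightarrow> x \<in> Field (C i) \<and> y \<in> Field (C j) \<and> (idxlt i j \<or> (i = j \<and> (x,y) \<in> C i))"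
  unfolding sumW_def by simp

lemma idxlt_trans: "idxlt i j \<Longrightarrow> idxlt j l \<Longrightarrow> idxlt i l" unfolding idxlt_def by auto
lemma idxlt_irrefl: "\<not> idxlt i i" unfolding idxlt_def by auto
lemma idxlt_asym: "idxlt i j \<Longrightarrow> \<not> idxlt j i" unfolding idxlt_def by auto
lemma idxlt_total: "i \<noteq> j \<Longrightarrow> idxlt i j \<or> idxlt j i" unfolding idxlt_def by auto

lemma wf_idx: "wf {((i::nat,x::nat),(j,y)). idxlt i j}"
proof -
  have "{((i::nat,x::nat),(j,y)). idxlt i j} \<subseteq> inv_image (less_than <*lex*> less_than) (\<lambda>(i,x). (if i = 0 then 1 else 0, i))"
  proof clarify
    fix i x j y assume "idxlt i j"
    then show "((i,x),(j,y)) \<in> inv_image (less_than <*lex*> less_than) (\<lambda>(i,x). (if i = 0 then 1 else 0, i))"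
      unfolding idxlt_def by auto
  qed
  moreover have "wf (inv_image (less_than <*lex*> less_than) (\<lambda>(i::nat,x::nat). (if i = 0 then 1::nat else 0, i)))"
    by (intro wf_inv_image wf_lex_prod wf_less_than)
  ultimately show ?thesis using wf_subset by blast
qed

lemma Field_sumW: assumes W: "\<And>i. Well_order (C i)" shows "Field (sumW C) = {(i,x). x \<in> Field (C i)}"
proof
  show "{(i,x). x \<in> Field (C i)} \<subseteq> Field (sumW C)"
  proof clarify
    fix i x assume "x \<in> Field (C i)"
    then have "((i,x),(i,x)) \<in> sumW C" unfolding mem_sumW using wo_refl[OF W] by blast
    then show "(i,x) \<in> Field (sumW C)" by (rule FieldI1)
  qed
  show "Field (sumW C) \<subseteq> {(i,x). x \<in> Field (C i)}"
  proof
    fix p assume "p \<in> Field (sumW C)"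
    then obtain q where "(p,q) \<in> sumW C \<or> (q,p) \<in> sumW C" unfolding Field_def by blast
    then show "p \<in> {(i,x). x \<in> Field (C i)}" by (cases p; cases q) (auto simp: mem_sumW)
  qed
qed

lemma Well_order_sumW:
  assumes W: "\<And>i. Well_order (C i)"
  shows "Well_order (sumW C)"
proof -
  have F: "Field (sumW C) = {(i,x). x \<in> Field (C i)}" by (rule Field_sumW[OF W])
  have "refl_on (Field (sumW C)) (sumW C)"
    unfolding refl_on_def F by (auto simp: mem_sumW wo_refl[OF W])
  moreover have "trans (sumW C)"
  proof (rule transI, clarify)
    fix i x j y l z assume a: "((i,x),(j,y)) \<in> sumW C" "((j,y),(l,z)) \<in> sumW C"
    then show "((i,x),(l,z)) \<in> sumW C" unfolding mem_sumW using idxlt_trans wo_trans[OF W] by metis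
  qed
  moreover have "antisym (sumW C)"
  proof (rule antisymI, clarify)
    fix i x j y assume a: "((i,x),(j,y)) \<in> sumW C" "((j,y),(i,x)) \<in> sumW C"
    then show "i = j \<and> x = y" unfolding mem_sumW using idxlt_asym idxlt_irrefl wo_antisym[OF W] by metis
  qed
  moreover have "total_on (Field (sumW C)) (sumW C)"
  proof (unfold F total_on_def, intro ballI impI)
    fix p q assume pq: "p \<in> {(i,x). x \<in> Field (C i)}" "q \<in> {(i,x). x \<in> Field (C i)}" "p \<noteq> q"
    obtain i x where p: "p = (i,x)" by (cases p)
    obtain j y where q: "q = (j,y)" by (cases q)
    have a: "x \<in> Field (C i)" "y \<in> Field (C j)" using pq p q by auto
    show "(p,q) \<in> sumW C \<or> (q,p) \<in> sumW C"
    proof (cases "i = j")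
      case True then show ?thesis using a wo_total[OF W] unfolding p q mem_sumW by metis
    next
      case False then show ?thesis using a idxlt_total unfolding p q mem_sumW by metis
    qed
  qed
  moreover have "wf (sumW C - Id)"
  proof -
    let ?R = "{((i::nat,x::nat),(j,y)). idxlt i j}"
    let ?S = "same_fst (\<lambda>_. True) (\<lambda>i. C i - Id)"
    have "wf ?S" by (rule wf_same_fst) (use wo_wf[OF W] in blast)
    moreover have "?R O ?S \<subseteq> ?R" unfolding same_fst_def by auto
    ultimately have "wf (?R \<union> ?S)" by (rule wf_union_compatible[OF wf_idx])
    moreover have "sumW C - Id \<subseteq> ?R \<union> ?S"
    proof
      fix pq assume h: "pq \<in> sumW C - Id"
      obtain i x j y where pq: "pq = ((i,x),(j,y))" by (cases pq) auto
      show "pq \<in> ?R \<union> ?S" using h unfolding pq by (auto simp: mem_sumW same_fst_def)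
    qed
    ultimately show ?thesis by (rule wf_subset)
  qed
  moreover have "sumW C \<subseteq> Field (sumW C) \<times> Field (sumW C)" by (auto intro: FieldI1 FieldI2)
  ultimately show ?thesis unfolding well_order_on_def linear_order_on_def partial_order_on_def preorder_on_def by blast
qed

lemma Well_order_single: "Well_order {(a::'a, a)}"
proof -
  have F: "Field {(a,a)} = {a}" unfolding Field_def by auto
  show ?thesis unfolding well_order_on_def F by simp
qed

lemma bound_wo:
  fixes B :: "nat \<Rightarrow> nat rel"
  assumes B: "\<And>i. Well_order (B i)"
  shows "\<exists>\<beta>::nat rel. Well_order \<beta> \<and> \<beta> \<noteq> {} \<and> (\<forall>i. (B i, \<beta>) \<in> ordLess)"
proof -
  define C where "C i = (if i = 0 then {(0::nat,0::nat)} else B (i - 1))" for i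
  have WC: "\<And>i. Well_order (C i)" unfolding C_def using B Well_order_single by auto
  have CS: "\<And>i. C (Suc i) = B i" unfolding C_def by simp
  have C0: "0 \<in> Field (C 0)" unfolding C_def Field_def by auto
  define W where "W = sumW C"
  have WW: "Well_order W" unfolding W_def by (rule Well_order_sumW[OF WC])
  have FW: "Field W = {(i,x). x \<in> Field (C i)}" unfolding W_def by (rule Field_sumW[OF WC])
  have less: "(B i, W) \<in> ordLess" for i
  proof (rule ccontr)
    assume "(B i, W) \<notin> ordLess"
    then have "(W, B i) \<in> ordLeq" using not_ordLess_iff_ordLeq[OF WW B] by blast
    then obtain f where emb: "embed W (B i) f" unfolding ordLeq_def by blast
    have comp: "compat W (B i) f" by (rule embed_compat[OF emb])
    have inj: "inj_on f (Field W)" by (rule embed_inj_on[OF WW emb])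
    define h where "h x = f (Suc i, x)" for x
    have inF: "(Suc i, x) \<in> Field W" if "x \<in> Field (B i)" for x using that CS[of i] by (simp add: FW)
    have H: "h x \<in> Field (B i)" if "x \<in> Field (B i)" for x
      unfolding h_def by (rule embed_in_Field[OF emb inF[OF that]])
    have M: "(h x, h y) \<in> B i \<and> h x \<noteq> h y" if "(x,y) \<in> B i" "x \<noteq> y" for x y
    proof -
      have xy: "x \<in> Field (B i)" "y \<in> Field (B i)" using that by (auto intro: FieldI1 FieldI2)
      have "((Suc i, x),(Suc i, y)) \<in> W" unfolding W_def mem_sumW CS using xy that by blast
      then have "(h x, h y) \<in> B i" using comp unfolding compat_def h_def by blast
      moreover have "h x \<noteq> h y" using inj inF[OF xy(1)] inF[OF xy(2)] that(2) unfolding h_def inj_on_def by blast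
      ultimately show ?thesis by blast
    qed
    have top: "(0::nat, 0::nat) \<in> Field W" unfolding FW using C0 by simp
    define p where "p = f (0,0)"
    have pF: "p \<in> Field (B i)" unfolding p_def by (rule embed_in_Field[OF emb top])
    have "(p, h p) \<in> B i" by (rule wo_mono_self[OF B H M pF])
    moreover have "((Suc i, p),(0,0)) \<in> W" unfolding W_def mem_sumW CS using pF C0 by (simp add: idxlt_def)
    then have "(h p, p) \<in> B i" using comp unfolding compat_def h_def p_def by blast
    moreover have "h p \<noteq> p" using inj inF[OF pF] top unfolding h_def p_def inj_on_def by blast
    ultimately show False using wo_antisym[OF B] by blast
  qed
  define \<beta> where "\<beta> = dir_image W prod_encode"
  have inj2: "inj_on prod_encode (Field W)" by (rule inj_prod_encode)
  have Wb: "Well_order \<beta>" unfolding \<beta>_def by (rule Well_order_dir_image[OF WW inj2])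
  have iso: "(W, \<beta>) \<in> ordIso" unfolding \<beta>_def by (rule dir_image_ordIso[OF WW inj2])
  have "((0::nat,0::nat),(0,0)) \<in> W" unfolding W_def mem_sumW using C0 wo_refl[OF WC] by blast
  then have "\<beta> \<noteq> {}" unfolding \<beta>_def dir_image_def by blast
  moreover have "\<forall>i. (B i, \<beta>) \<in> ordLess" using less iso ordLess_ordIso_trans by blast
  ultimately show ?thesis using Wb by blast
qed



lemma Well_order_empty: "Well_order ({} :: 'a rel)"
  by (simp add: well_order_on_def linear_order_on_def partial_order_on_def preorder_on_def
      refl_on_def trans_def antisym_def total_on_def)

lemma Sigma_sub: "Sigma_set k \<beta> A \<Longrightarrow> A \<subseteq> space k"
proof (induction rule: Sigma_set.induct)
  case (Sigma0 \<beta> A) then show ?case unfolding clopen_def baire_open_def by blast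
next
  case (SigmaA \<beta> P)
  have "suslinA P \<subseteq> P []"
  proof
    fix x assume "x \<in> suslinA P"
    then obtain f where "\<forall>n. x \<in> P (map f [0..<n])" unfolding suslinA_def by blast
    then show "x \<in> P []" by (metis list.simps(8) upt_0)
  qed
  then show ?case using SigmaA(3) by blast
qed

lemma suslin_sub: "suslin_set k A \<Longrightarrow> A \<subseteq> space k"
  unfolding suslin_set_def using Sigma_sub by blast

lemma clopen_suslin: "clopen k A \<Longrightarrow> suslin_set k A"
  unfolding suslin_set_def using Sigma_set.Sigma0[OF Well_order_empty] Well_order_empty by blast

lemma suslinA_const: "suslinA (\<lambda>_. X) = X"
  unfolding suslinA_def by auto

lemma suslinA_core:
  assumes sub: "\<And>s. P s \<subseteq> space k" and co: "\<And>s. suslin_set k (space k - P s)"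
  shows "suslin_set k (suslinA P)"
proof -
  have "\<forall>s. \<exists>\<beta>. Well_order \<beta> \<and> Sigma_set k \<beta> (space k - P s)" using co unfolding suslin_set_def by blast
  then obtain G where G: "\<And>s. Well_order (G s) \<and> Sigma_set k (G s) (space k - P s)" by metis
  obtain \<beta> :: "nat rel" where b: "Well_order \<beta>" "\<beta> \<noteq> {}" "\<forall>i. (G (list_decode i), \<beta>) \<in> ordLess"
    using bound_wo[of "\<lambda>i. G (list_decode i)"] G by blast
  have "\<forall>s. P s \<subseteq> space k \<and> (\<exists>\<gamma>. (\<gamma>, \<beta>) \<in> ordLess \<and> Sigma_set k \<gamma> (space k - P s))"
  proof
    fix s
    have "(G s, \<beta>) \<in> ordLess" using b(3)[rule_format, of "list_encode s"] by simp
    then show "P s \<subseteq> space k \<and> (\<exists>\<gamma>. (\<gamma>, \<beta>) \<in> ordLess \<and> Sigma_set k \<gamma> (space k - P s))"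
      using sub G by blast
  qed
  then have "Sigma_set k \<beta> (suslinA P)" by (rule Sigma_set.SigmaA[OF b(1) b(2)])
  then show ?thesis unfolding suslin_set_def using b(1) by blast
qed

lemma suslin_compl: "suslin_set k A \<Longrightarrow> suslin_set k (space k - A)"
proof -
  assume A: "suslin_set k A"
  have sub: "A \<subseteq> space k" by (rule suslin_sub[OF A])
  have "suslin_set k (suslinA (\<lambda>_. space k - A))"
    by (rule suslinA_core) (use A sub in \<open>auto simp: Diff_Diff_Int Int_absorb1\<close>)
  then show ?thesis by (simp add: suslinA_const)
qed

lemma suslinA_closed:
  assumes "\<And>s. suslin_set k (P s)"
  shows "suslin_set k (suslinA P)"
  by (rule suslinA_core) (use assms suslin_sub suslin_compl in auto)

lemma suslin_UN:
  assumes A: "\<And>i::nat. suslin_set k (A i)"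
  shows "suslin_set k (\<Union>i. A i)"
proof -
  define P where "P s = (case s of [] \<Rightarrow> space k | i # _ \<Rightarrow> A i)" for s
  have sp: "suslin_set k (space k)"
    by (rule clopen_suslin) (auto simp: clopen_def baire_open_def)
  have "suslin_set k (suslinA P)" by (rule suslinA_closed) (auto simp: P_def sp A split: list.split)
  moreover have "suslinA P = (\<Union>i. A i)"
  proof
    show "suslinA P \<subseteq> (\<Union>i. A i)"
    proof
      fix x assume "x \<in> suslinA P"
      then obtain f where "\<forall>n. x \<in> P (map f [0..<n])" unfolding suslinA_def by blast
      then have "x \<in> P (map f [0..<1])" by blast
      then show "x \<in> (\<Union>i. A i)" by (auto simp: P_def)
    qed
    show "(\<Union>i. A i) \<subseteq> suslinA P"
    proof
      fix x assume "x \<in> (\<Union>i. A i)"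
      then obtain i where xi: "x \<in> A i" by blast
      have xs: "x \<in> space k" using xi suslin_sub[OF A] by blast
      have "x \<in> P (map (\<lambda>_. i) [0..<n])" for n
        using xi xs by (cases n) (auto simp: P_def map_replicate_const)
      then show "x \<in> suslinA P" unfolding suslinA_def by blast
    qed
  qed
  ultimately show ?thesis by simp
qed

lemma suslin_INT:
  assumes A: "\<And>i::nat. suslin_set k (A i)"
  shows "suslin_set k (\<Inter>i. A i)"
proof -
  have "suslin_set k (suslinA (\<lambda>s. A (length s)))" by (rule suslinA_closed) (rule A)
  moreover have "suslinA (\<lambda>s. A (length s)) = (\<Inter>i. A i)" unfolding suslinA_def by auto
  ultimately show ?thesis by simp
qed

definition SP :: "nat \<Rightarrow> ((nat \<Rightarrow> nat) list \<Rightarrow> bool) \<Rightarrow> bool" where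
  "SP k \<Phi> \<longleftrightarrow> suslin_set k {fs \<in> space k. \<Phi> fs}"

lemma space_suslin: "suslin_set k (space k)"
  by (rule clopen_suslin) (auto simp: clopen_def baire_open_def)

lemma empty_suslin: "suslin_set k {}"
  by (rule clopen_suslin) (auto simp: clopen_def baire_open_def)

lemma SP_const: "SP k (\<lambda>_. C)"
  unfolding SP_def by (cases C) (simp_all add: space_suslin empty_suslin)

lemma SP_not: "SP k \<Phi> \<Longrightarrow> SP k (\<lambda>fs. \<not> \<Phi> fs)"
proof -
  assume "SP k \<Phi>"
  then have "suslin_set k (space k - {fs \<in> space k. \<Phi> fs})" unfolding SP_def by (rule suslin_compl)
  moreover have "space k - {fs \<in> space k. \<Phi> fs} = {fs \<in> space k. \<not> \<Phi> fs}" by auto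
  ultimately show ?thesis unfolding SP_def by simp
qed

lemma SP_ex_nat: "(\<And>n::nat. SP k (\<Phi> n)) \<Longrightarrow> SP k (\<lambda>fs. \<exists>n. \<Phi> n fs)"
proof -
  assume "\<And>n. SP k (\<Phi> n)"
  then have "suslin_set k (\<Union>n. {fs \<in> space k. \<Phi> n fs})" unfolding SP_def by (rule suslin_UN)
  moreover have "(\<Union>n. {fs \<in> space k. \<Phi> n fs}) = {fs \<in> space k. \<exists>n. \<Phi> n fs}" by auto
  ultimately show ?thesis unfolding SP_def by simp
qed

lemma SP_all_nat: "(\<And>n::nat. SP k (\<Phi> n)) \<Longrightarrow> SP k (\<lambda>fs. \<forall>n. \<Phi> n fs)"
proof -
  assume "\<And>n. SP k (\<Phi> n)"
  then have "suslin_set k (\<Inter>n. {fs \<in> space k. \<Phi> n fs})" unfolding SP_def by (rule suslin_INT)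
  moreover have "(\<Inter>n. {fs \<in> space k. \<Phi> n fs}) = {fs \<in> space k. \<forall>n. \<Phi> n fs}" by auto
  ultimately show ?thesis unfolding SP_def by simp
qed

lemma SP_ex: "(\<And>x::'a::countable. SP k (\<Phi> x)) \<Longrightarrow> SP k (\<lambda>fs. \<exists>x. \<Phi> x fs)"
proof -
  assume a: "\<And>x. SP k (\<Phi> x)"
  have "SP k (\<lambda>fs. \<exists>n. \<Phi> (from_nat n) fs)" by (rule SP_ex_nat) (rule a)
  moreover have "(\<exists>n. \<Phi> (from_nat n) fs) \<longleftrightarrow> (\<exists>x. \<Phi> x fs)" for fs
  proof
    assume "\<exists>x. \<Phi> x fs" then obtain x where "\<Phi> x fs" by blast
    then show "\<exists>n. \<Phi> (from_nat n) fs" by (intro exI[of _ "to_nat x"]) simp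
  qed blast
  ultimately show ?thesis by simp
qed

lemma SP_all: "(\<And>x::'a::countable. SP k (\<Phi> x)) \<Longrightarrow> SP k (\<lambda>fs. \<forall>x. \<Phi> x fs)"
proof -
  assume a: "\<And>x. SP k (\<Phi> x)"
  have "SP k (\<lambda>fs. \<forall>n. \<Phi> (from_nat n) fs)" by (rule SP_all_nat) (rule a)
  moreover have "(\<forall>n. \<Phi> (from_nat n) fs) \<longleftrightarrow> (\<forall>x. \<Phi> x fs)" for fs
  proof
    assume h: "\<forall>n. \<Phi> (from_nat n) fs"
    show "\<forall>x. \<Phi> x fs"
    proof
      fix x show "\<Phi> x fs" using h[rule_format, of "to_nat x"] by simp
    qed
  qed blast
  ultimately show ?thesis by simp
qed

lemma SP_and: "SP k \<Phi> \<Longrightarrow> SP k \<Psi> \<Longrightarrow> SP k (\<lambda>fs. \<Phi> fs \<and> \<Psi> fs)"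
proof -
  assume a: "SP k \<Phi>" "SP k \<Psi>"
  have "SP k (\<lambda>fs. \<forall>b::bool. if b then \<Phi> fs else \<Psi> fs)" proof (rule SP_all)
    fix b :: bool show "SP k (\<lambda>fs. if b then \<Phi> fs else \<Psi> fs)" by (cases b) (simp_all add: a)
  qed
  moreover have "(\<forall>b::bool. if b then \<Phi> fs else \<Psi> fs) \<longleftrightarrow> \<Phi> fs \<and> \<Psi> fs" for fs by (simp add: all_bool_eq)
  ultimately show ?thesis by simp
qed

lemma SP_or: "SP k \<Phi> \<Longrightarrow> SP k \<Psi> \<Longrightarrow> SP k (\<lambda>fs. \<Phi> fs \<or> \<Psi> fs)"
proof -
  assume a: "SP k \<Phi>" "SP k \<Psi>"
  have "SP k (\<lambda>fs. \<exists>b::bool. if b then \<Phi> fs else \<Psi> fs)" proof (rule SP_ex)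
    fix b :: bool show "SP k (\<lambda>fs. if b then \<Phi> fs else \<Psi> fs)" by (cases b) (simp_all add: a)
  qed
  moreover have "(\<exists>b::bool. if b then \<Phi> fs else \<Psi> fs) \<longleftrightarrow> \<Phi> fs \<or> \<Psi> fs" for fs by (simp add: ex_bool_eq)
  ultimately show ?thesis by simp
qed

lemma SP_conj_imp: "(C \<Longrightarrow> SP k \<Phi>) \<Longrightarrow> SP k (\<lambda>fs. C \<and> \<Phi> fs)"
  by (cases C) (simp_all add: SP_const)

lemma SP_cong: "(\<And>fs. fs \<in> space k \<Longrightarrow> \<Phi> fs = \<Psi> fs) \<Longrightarrow> SP k \<Psi> \<Longrightarrow> SP k \<Phi>"
proof -
  assume "\<And>fs. fs \<in> space k \<Longrightarrow> \<Phi> fs = \<Psi> fs"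
  then have "{fs \<in> space k. \<Phi> fs} = {fs \<in> space k. \<Psi> fs}" by auto
  then show "SP k \<Psi> \<Longrightarrow> SP k \<Phi>" unfolding SP_def by simp
qed

lemma SP_A: "(\<And>s. SP k ((\<Phi> :: nat list \<Rightarrow> _) s)) \<Longrightarrow> SP k (\<lambda>fs. \<exists>f. \<forall>n. \<Phi> (map f [0..<n]) fs)"
proof -
  assume "\<And>s. SP k (\<Phi> s)"
  then have "suslin_set k (suslinA (\<lambda>s. {fs \<in> space k. \<Phi> s fs}))" unfolding SP_def by (rule suslinA_closed)
  moreover have "suslinA (\<lambda>s. {fs \<in> space k. \<Phi> s fs}) = {fs \<in> space k. \<exists>f. \<forall>n. \<Phi> (map f [0..<n]) fs}"
    unfolding suslinA_def by auto
  ultimately show ?thesis unfolding SP_def by simp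
qed

lemma open_coord:
  assumes "0 < k" shows "baire_open k {fs \<in> space k. Q ((fs ! 0) a)}"
  unfolding baire_open_def
proof (intro conjI ballI)
  show "{fs \<in> space k. Q ((fs ! 0) a)} \<subseteq> space k" by blast
  fix fs assume fs: "fs \<in> {fs \<in> space k. Q ((fs ! 0) a)}"
  show "\<exists>n. \<forall>gs\<in>space k. (\<forall>i<k. \<forall>m<n. (gs ! i) m = (fs ! i) m) \<longrightarrow> gs \<in> {fs \<in> space k. Q ((fs ! 0) a)}"
  proof (intro exI ballI impI)
    fix gs assume "gs \<in> space k" "\<forall>i<k. \<forall>m<Suc a. (gs ! i) m = (fs ! i) m"
    then show "gs \<in> {fs \<in> space k. Q ((fs ! 0) a)}" using fs assms by auto
  qed
qed

lemma SP_coord: "0 < k \<Longrightarrow> SP k (\<lambda>fs. Q ((fs ! 0) a))"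
proof -
  assume k: "0 < k"
  have "space k - {fs \<in> space k. Q ((fs ! 0) a)} = {fs \<in> space k. \<not> Q ((fs ! 0) a)}" by auto
  then have "clopen k {fs \<in> space k. Q ((fs ! 0) a)}"
    unfolding clopen_def using open_coord[OF k, of Q a] open_coord[OF k, of "\<lambda>x. \<not> Q x" a] by simp
  then show ?thesis unfolding SP_def by (rule clopen_suslin)
qed

lemma swap_length [simp]: "length (swap_list i j xs) = length xs"
  unfolding swap_list_def by simp

lemma swap_nth: "i < length xs \<Longrightarrow> j < length xs \<Longrightarrow> t < length xs \<Longrightarrow>
  swap_list i j xs ! t = xs ! (if t = j then i else if t = i then j else t)"
  unfolding swap_list_def by (auto simp: nth_list_update)

lemma open_pre:
  assumes ij: "i < k" "j < k" and A: "baire_open k A"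
  shows "baire_open k {fs \<in> space k. swap_list i j fs \<in> A}"
  unfolding baire_open_def
proof (intro conjI ballI)
  show "{fs \<in> space k. swap_list i j fs \<in> A} \<subseteq> space k" by blast
  fix fs assume fs: "fs \<in> {fs \<in> space k. swap_list i j fs \<in> A}"
  then have fsk: "length fs = k" "swap_list i j fs \<in> A" by (auto simp: space_def)
  then obtain n where n: "\<forall>gs\<in>space k. (\<forall>t<k. \<forall>m<n. (gs ! t) m = (swap_list i j fs ! t) m) \<longrightarrow> gs \<in> A"
    using A unfolding baire_open_def by blast
  show "\<exists>n. \<forall>gs\<in>space k. (\<forall>t<k. \<forall>m<n. (gs ! t) m = (fs ! t) m) \<longrightarrow> gs \<in> {fs \<in> space k. swap_list i j fs \<in> A}"
  proof (intro exI ballI impI)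
    fix gs assume gs: "gs \<in> space k" "\<forall>t<k. \<forall>m<n. (gs ! t) m = (fs ! t) m"
    have gsk: "length gs = k" using gs by (simp add: space_def)
    have "swap_list i j gs \<in> space k" using gsk by (simp add: space_def)
    moreover have "\<forall>t<k. \<forall>m<n. (swap_list i j gs ! t) m = (swap_list i j fs ! t) m"
    proof (intro allI impI)
      fix t m assume tm: "t < k" "m < n"
      define u where "u = (if t = j then i else if t = i then j else t)"
      have u: "u < k" unfolding u_def using ij tm by auto
      have "(swap_list i j gs ! t) m = (gs ! u) m" unfolding u_def using swap_nth[of i gs j t] ij tm gsk by simp
      also have "\<dots> = (fs ! u) m" using gs(2) u tm by blast
      also have "\<dots> = (swap_list i j fs ! t) m" unfolding u_def using swap_nth[of i fs j t] ij tm fsk by simp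
      finally show "(swap_list i j gs ! t) m = (swap_list i j fs ! t) m" .
    qed
    ultimately have "swap_list i j gs \<in> A" using n by blast
    then show "gs \<in> {fs \<in> space k. swap_list i j fs \<in> A}" using gs by blast
  qed
qed

lemma swap_space: "fs \<in> space k \<Longrightarrow> swap_list i j fs \<in> space k"
  by (simp add: space_def)

lemma Sigma_pre:
  assumes ij: "i < k" "j < k"
  shows "Sigma_set k \<beta> A \<Longrightarrow> Sigma_set k \<beta> {fs \<in> space k. swap_list i j fs \<in> A}"
proof (induction rule: Sigma_set.induct)
  case (Sigma0 \<beta> A)
  have "space k - {fs \<in> space k. swap_list i j fs \<in> A} = {fs \<in> space k. swap_list i j fs \<in> space k - A}"
    using swap_space by blast
  then have "clopen k {fs \<in> space k. swap_list i j fs \<in> A}"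
    using Sigma0(3) open_pre[OF ij, of A] open_pre[OF ij, of "space k - A"] unfolding clopen_def by simp
  then show ?case by (rule Sigma_set.Sigma0[OF Sigma0(1,2)])
next
  case (SigmaA \<beta> P)
  define P' where "P' s = {fs \<in> space k. swap_list i j fs \<in> P s}" for s
  have eq: "{fs \<in> space k. swap_list i j fs \<in> suslinA P} = suslinA P'"
    unfolding P'_def suslinA_def by auto
  have "\<forall>s. P' s \<subseteq> space k \<and> (\<exists>\<gamma>. (\<gamma>, \<beta>) \<in> ordLess \<and> Sigma_set k \<gamma> (space k - P' s))"
  proof
    fix s
    obtain \<gamma> where g: "(\<gamma>, \<beta>) \<in> ordLess" "Sigma_set k \<gamma> {fs \<in> space k. swap_list i j fs \<in> space k - P s}"
      using SigmaA(3) by blast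
    have "{fs \<in> space k. swap_list i j fs \<in> space k - P s} = space k - P' s"
      unfolding P'_def using swap_space by blast
    then show "P' s \<subseteq> space k \<and> (\<exists>\<gamma>. (\<gamma>, \<beta>) \<in> ordLess \<and> Sigma_set k \<gamma> (space k - P' s))"
      using g unfolding P'_def by auto
  qed
  then show ?case unfolding eq by (rule Sigma_set.SigmaA[OF SigmaA(1,2)])
qed

lemma SP_swap: "i < k \<Longrightarrow> j < k \<Longrightarrow> SP k \<Phi> \<Longrightarrow> SP k (\<lambda>fs. \<Phi> (swap_list i j fs))"
proof -
  assume ij: "i < k" "j < k" and "SP k \<Phi>"
  then obtain \<beta> where b: "Well_order \<beta>" "Sigma_set k \<beta> {fs \<in> space k. \<Phi> fs}" unfolding SP_def suslin_set_def by blast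
  have "Sigma_set k \<beta> {fs \<in> space k. swap_list i j fs \<in> {fs \<in> space k. \<Phi> fs}}" by (rule Sigma_pre[OF ij b(2)])
  moreover have "{fs \<in> space k. swap_list i j fs \<in> {fs \<in> space k. \<Phi> fs}} = {fs \<in> space k. \<Phi> (swap_list i j fs)}"
    using swap_space by blast
  ultimately show ?thesis unfolding SP_def suslin_set_def using b(1) by auto
qed



lemma inv1: "step P (list_encode [1, n, k], as, fs, b) \<Longrightarrow> b = Suc (as ! 0)"
  unfolding step_def Let_def prod.case by (simp add: list_encode_eq del: list_encode.simps)
lemma inv2: "step P (list_encode [2, n, k, q], as, fs, b) \<Longrightarrow> b = q"
  unfolding step_def Let_def prod.case by (simp add: list_encode_eq del: list_encode.simps)
lemma inv3: "step P (list_encode [3, n, k], as, fs, b) \<Longrightarrow> b = as ! 0"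
  unfolding step_def Let_def prod.case by (simp add: list_encode_eq del: list_encode.simps)
lemma inv4: "step P (list_encode [4, n, k, e1, e2], as, fs, b) \<Longrightarrow> \<exists>c. P (e2, as, fs, c) \<and> P (e1, c # as, fs, b)"
  unfolding step_def Let_def prod.case by (simp add: list_encode_eq del: list_encode.simps)
lemma inv5a: "step P (list_encode [5, n, k, e1, e2], 0 # as', fs, b) \<Longrightarrow> P (e1, as', fs, b)"
  unfolding step_def Let_def prod.case by (simp add: list_encode_eq del: list_encode.simps)
lemma inv5b: "step P (e, Suc m # as', fs, b) \<Longrightarrow> e = list_encode [5, n, k, e1, e2] \<Longrightarrow>
   \<exists>c. P (e, m # as', fs, c) \<and> P (e2, c # m # as', fs, b)"
  unfolding step_def Let_def prod.case by (auto simp add: list_encode_eq simp del: list_encode.simps)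
lemma inv6a: "step P (list_encode [6, n, k, 0, i, j, e1], as, fs, b) \<Longrightarrow> P (e1, swap_list i j as, fs, b)"
  unfolding step_def Let_def prod.case by (simp add: list_encode_eq del: list_encode.simps)
lemma inv6b: "step P (list_encode [6, n, k, 1, i, j, e1], as, fs, b) \<Longrightarrow> P (e1, as, swap_list i j fs, b)"
  unfolding step_def Let_def prod.case by (simp add: list_encode_eq del: list_encode.simps)
lemma inv7: "step P (list_encode [7, n, k], as, fs, b) \<Longrightarrow> b = (fs ! 0) (as ! 0)"
  unfolding step_def Let_def prod.case by (simp add: list_encode_eq del: list_encode.simps)
lemma inv8: "step P (list_encode [8, n, k, e1], as, fs, b) \<Longrightarrow> \<exists>g. (\<forall>t. P (e1, t # as, fs, g t)) \<and> b = Sfun g"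
  unfolding step_def Let_def prod.case by (simp add: list_encode_eq del: list_encode.simps)
lemma inv9: "step P (list_encode [9, n, k, m], d # as', fs, b) \<Longrightarrow> P (d, take m as', fs, b)"
  unfolding step_def Let_def prod.case by (simp add: list_encode_eq del: list_encode.simps)

definition Dt :: "comp \<Rightarrow> bool" where
  "Dt x \<longleftrightarrow> (\<forall>b'. omegaS (fst x, fst (snd x), fst (snd (snd x)), b') \<longrightarrow> b' = snd (snd (snd x)))"

lemma omega_det_aux: "omegaS x \<Longrightarrow> Dt x"
proof (induction rule: omegaS.induct)
  case (1 x)
  obtain e as fs b where x: "x = (e,as,fs,b)" by (cases x)
  have S1: "step (\<lambda>x. omegaS x \<and> Dt x) (e,as,fs,b)" using 1 x by simp
  show ?case unfolding Dt_def x fst_conv snd_conv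
  proof (intro allI impI)
    fix b' assume "omegaS (e,as,fs,b')"
    then have S2: "step omegaS (e,as,fs,b')" by (cases rule: omegaS.cases) simp
    show "b' = b"
      using S1 unfolding step_def Let_def prod.case
      apply (elim disjE exE conjE)
      subgoal premises p
      proof -
        have ee: "e = list_encode [1, length as, length fs]" and bb: "b = Suc (as ! 0)" using p by blast+
        show ?thesis using inv1[OF S2[unfolded ee]] bb by simp
      qed
      subgoal premises p for q
      proof -
        have ee: "e = list_encode [2, length as, length fs, q]" and bb: "b = q" using p by blast+
        show ?thesis using inv2[OF S2[unfolded ee]] bb by simp
      qed
      subgoal premises p
      proof -
        have ee: "e = list_encode [3, length as, length fs]" and bb: "b = as ! 0" using p by blast+
        show ?thesis using inv3[OF S2[unfolded ee]] bb by simp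
      qed
      subgoal premises p for e1 e2 c
      proof -
        have ee: "e = list_encode [4, length as, length fs, e1, e2]" using p by blast
        obtain c' where c': "omegaS (e2, as, fs, c')" "omegaS (e1, c' # as, fs, b')"
          using inv4[OF S2[unfolded ee]] by blast
        have "Dt (e2, as, fs, c)" "Dt (e1, c # as, fs, b)" using p by blast+
        then show ?thesis using c' unfolding Dt_def by auto
      qed
      subgoal premises p for e1 e2 as'
      proof -
        have as: "as = 0 # as'" and ee: "e = list_encode [5, length as, length fs, e1, e2]" using p by blast+
        have c': "omegaS (e1, as', fs, b')" using inv5a[OF S2[unfolded as ee]] by simp
        have "Dt (e1, as', fs, b)" using p by blast+
        then show ?thesis using c' unfolding Dt_def by auto
      qed
      subgoal premises p for e1 e2 m as' c
      proof -
        have as: "as = Suc m # as'" and ee: "e = list_encode [5, length as, length fs, e1, e2]" using p by blast+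
        obtain c' where c': "omegaS (e, m # as', fs, c')" "omegaS (e2, c' # m # as', fs, b')"
          using inv5b[OF S2[unfolded as] ee] by blast
        have "Dt (e, m # as', fs, c)" "Dt (e2, c # m # as', fs, b)" using p by blast+
        then show ?thesis using c' unfolding Dt_def by auto
      qed
      subgoal premises p for i j e1
      proof -
        have ee: "e = list_encode [6, length as, length fs, 0, i, j, e1]" using p by blast
        have c': "omegaS (e1, swap_list i j as, fs, b')" using inv6a[OF S2[unfolded ee]] by simp
        have "Dt (e1, swap_list i j as, fs, b)" using p by blast+
        then show ?thesis using c' unfolding Dt_def by auto
      qed
      subgoal premises p for i j e1
      proof -
        have ee: "e = list_encode [6, length as, length fs, 1, i, j, e1]" using p by blast
        have c': "omegaS (e1, as, swap_list i j fs, b')" using inv6b[OF S2[unfolded ee]] by simp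
        have "Dt (e1, as, swap_list i j fs, b)" using p by blast+
        then show ?thesis using c' unfolding Dt_def by auto
      qed
      subgoal premises p
      proof -
        have ee: "e = list_encode [7, length as, length fs]" and bb: "b = (fs ! 0) (as ! 0)" using p by blast+
        show ?thesis using inv7[OF S2[unfolded ee]] bb by simp
      qed
      subgoal premises p for e1 g
      proof -
        have ee: "e = list_encode [8, length as, length fs, e1]" and bb: "b = Sfun g"
          and gg: "\<forall>t. omegaS (e1, t # as, fs, g t) \<and> Dt (e1, t # as, fs, g t)" using p by blast+
        obtain g' where g': "\<forall>t. omegaS (e1, t # as, fs, g' t)" "b' = Sfun g'"
          using inv8[OF S2[unfolded ee]] by blast
        have "g' = g"
        proof
          fix t show "g' t = g t" using gg g'(1) unfolding Dt_def by auto
        qed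
        then show ?thesis using g'(2) bb by simp
      qed
      subgoal premises p for m d as'
      proof -
        have as: "as = d # as'" and ee: "e = list_encode [9, length as, length fs, m]" using p by blast+
        have c': "omegaS (d, take m as', fs, b')" using inv9[OF S2[unfolded as ee]] by simp
        have "Dt (d, take m as', fs, b)" using p by blast+
        then show ?thesis using c' unfolding Dt_def by auto
      qed
      done
  qed
qed

lemma omega_det: "omegaS (e,as,fs,b) \<Longrightarrow> omegaS (e,as,fs,b') \<Longrightarrow> b' = b"
  using omega_det_aux[of "(e,as,fs,b)"] unfolding Dt_def by auto

lemma rank_omega: "comp_rank_le \<alpha> \<xi> x \<Longrightarrow> omegaS x"
proof (induction rule: comp_rank_le.induct)
  case (1 \<xi> x)
  have "step omegaS x" using step_mono[rule_format, OF _ 1(2), of omegaS] by blast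
  then show ?case by (rule omegaS.intros)
qed

lemma Sfun_char:
  assumes H2: "\<And>e as fs c c'. Q (e,as,fs,c) \<Longrightarrow> Q (e,as,fs,c') \<Longrightarrow> c = c'"
    and g: "\<forall>t. Q (e1, t # as, fs, g t)"
  shows "Sfun g = (if (\<exists>f. \<forall>n. \<exists>c. 0 < c \<and> Q (e1, list_encode (map f [0..<n]) # as, fs, c)) then 1 else 0)"
proof -
  have "(\<exists>f. \<forall>n. \<exists>c. 0 < c \<and> Q (e1, list_encode (map f [0..<n]) # as, fs, c)) \<longleftrightarrow>
        \<not> (\<forall>f. \<exists>n. g (seqcode f n) = 0)"
  proof
    assume "\<exists>f. \<forall>n. \<exists>c. 0 < c \<and> Q (e1, list_encode (map f [0..<n]) # as, fs, c)"
    then obtain f where f: "\<forall>n. \<exists>c. 0 < c \<and> Q (e1, list_encode (map f [0..<n]) # as, fs, c)" by blast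
    have "g (seqcode f n) \<noteq> 0" for n
    proof -
      obtain c where c: "0 < c" "Q (e1, list_encode (map f [0..<n]) # as, fs, c)" using f by blast
      have "Q (e1, list_encode (map f [0..<n]) # as, fs, g (seqcode f n))" using g unfolding seqcode_def by blast
      then have "g (seqcode f n) = c" using H2 c(2) by blast
      then show ?thesis using c(1) by simp
    qed
    then show "\<not> (\<forall>f. \<exists>n. g (seqcode f n) = 0)" by blast
  next
    assume "\<not> (\<forall>f. \<exists>n. g (seqcode f n) = 0)"
    then obtain f where f: "\<forall>n. g (seqcode f n) \<noteq> 0" by auto
    have "\<exists>c. 0 < c \<and> Q (e1, list_encode (map f [0..<n]) # as, fs, c)" for n
      using f g unfolding seqcode_def by blast
    then show "\<exists>f. \<forall>n. \<exists>c. 0 < c \<and> Q (e1, list_encode (map f [0..<n]) # as, fs, c)" by blast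
  qed
  then show ?thesis unfolding Sfun_def by auto
qed

lemma SP_S8:
  assumes H1: "\<And>e as b. SP k (\<lambda>fs. Q (e,as,fs,b))"
    and H2: "\<And>e as fs c c'. Q (e,as,fs,c) \<Longrightarrow> Q (e,as,fs,c') \<Longrightarrow> c = c'"
  shows "SP k (\<lambda>fs. \<exists>g. (\<forall>t. Q (e1, t # as, fs, g t)) \<and> b = Sfun g)"
proof -
  define Z where "Z fs \<longleftrightarrow> (\<exists>f. \<forall>n. \<exists>c. 0 < c \<and> Q (e1, list_encode (map f [0..<n]) # as, fs, c))" for fs
  have eq: "(\<exists>g. (\<forall>t. Q (e1, t # as, fs, g t)) \<and> b = Sfun g) \<longleftrightarrow>
      (\<forall>t. \<exists>c. Q (e1, t # as, fs, c)) \<and> (if b = 1 then Z fs else if b = 0 then \<not> Z fs else False)" for fs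
  proof
    assume "\<exists>g. (\<forall>t. Q (e1, t # as, fs, g t)) \<and> b = Sfun g"
    then obtain g where g: "\<forall>t. Q (e1, t # as, fs, g t)" "b = Sfun g" by blast
    have "Sfun g = (if Z fs then 1 else 0)" unfolding Z_def by (rule Sfun_char[OF H2 g(1)])
    then show "(\<forall>t. \<exists>c. Q (e1, t # as, fs, c)) \<and> (if b = 1 then Z fs else if b = 0 then \<not> Z fs else False)"
      using g by auto
  next
    assume a: "(\<forall>t. \<exists>c. Q (e1, t # as, fs, c)) \<and> (if b = 1 then Z fs else if b = 0 then \<not> Z fs else False)"
    define g where "g t = (SOME c. Q (e1, t # as, fs, c))" for t
    have g: "\<forall>t. Q (e1, t # as, fs, g t)" unfolding g_def using a by (metis someI_ex)
    have "Sfun g = (if Z fs then 1 else 0)" unfolding Z_def by (rule Sfun_char[OF H2 g])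
    then have "b = Sfun g" using a by (auto split: if_splits)
    then show "\<exists>g. (\<forall>t. Q (e1, t # as, fs, g t)) \<and> b = Sfun g" using g by blast
  qed
  have SZ: "SP k Z" unfolding Z_def
    by (rule SP_A) (intro SP_ex SP_conj_imp H1)
  have "SP k (\<lambda>fs. (\<forall>t. \<exists>c. Q (e1, t # as, fs, c)) \<and> (if b = 1 then Z fs else if b = 0 then \<not> Z fs else False))"
  proof (rule SP_and)
    show "SP k (\<lambda>fs. \<forall>t. \<exists>c. Q (e1, t # as, fs, c))" by (intro SP_all SP_ex H1)
    show "SP k (\<lambda>fs. if b = 1 then Z fs else if b = 0 then \<not> Z fs else False)"
      by (cases "b = 1"; cases "b = 0") (simp_all add: SZ SP_not[OF SZ] SP_const)
  qed
  then show ?thesis using eq by simp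
qed

lemma SP_step:
  assumes H1: "\<And>e as b. SP k (\<lambda>fs. Q (e,as,fs,b))"
    and H2: "\<And>e as fs c c'. Q (e,as,fs,c) \<Longrightarrow> Q (e,as,fs,c') \<Longrightarrow> c = c'"
  shows "SP k (\<lambda>fs. step Q (e,as,fs,b))"
proof -
  have d1: "SP k (\<lambda>fs. (e = list_encode [1, (length as), k] \<and> (length as) \<ge> 1 \<and> b = Suc (as ! 0)))"
    by (rule SP_const)
  have d2: "SP k (\<lambda>fs. (\<exists>q. e = list_encode [2, (length as), k, q] \<and> b = q))"
    by (rule SP_const)
  have d3: "SP k (\<lambda>fs. (e = list_encode [3, (length as), k] \<and> (length as) \<ge> 1 \<and> b = as ! 0))"
    by (rule SP_const)
  have d4: "SP k (\<lambda>fs. (\<exists>e1 e2 c. e = list_encode [4, (length as), k, e1, e2] \<and>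
        Q (e2, as, fs, c) \<and> Q (e1, c # as, fs, b)))"
    by (intro SP_ex SP_conj_imp SP_and H1)
  have d5: "SP k (\<lambda>fs. (\<exists>e1 e2 as'. e = list_encode [5, (length as), k, e1, e2] \<and> as = 0 # as' \<and> Q (e1, as', fs, b)))"
    by (intro SP_ex SP_conj_imp H1)
  have d6: "SP k (\<lambda>fs. (\<exists>e1 e2 m as' c. e = list_encode [5, (length as), k, e1, e2] \<and> as = Suc m # as' \<and>
        Q (e, m # as', fs, c) \<and> Q (e2, c # m # as', fs, b)))"
    by (intro SP_ex SP_conj_imp SP_and H1)
  have d7: "SP k (\<lambda>fs. (\<exists>i j e1. e = list_encode [6, (length as), k, 0, i, j, e1] \<and> i < (length as) \<and> j < (length as) \<and>
        Q (e1, swap_list i j as, fs, b)))"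
    by (intro SP_ex SP_conj_imp H1)
  have d8: "SP k (\<lambda>fs. (\<exists>i j e1. e = list_encode [6, (length as), k, 1, i, j, e1] \<and> i < k \<and> j < k \<and>
        Q (e1, as, swap_list i j fs, b)))"
    proof (intro SP_ex SP_conj_imp)
    fix i j e1 assume ij: "i < k" "j < k"
    show "SP k (\<lambda>fs. Q (e1, as, swap_list i j fs, b))"
      by (rule SP_swap[OF ij, where \<Phi> = "\<lambda>fs. Q (e1, as, fs, b)"]) (rule H1)
  qed
  have d9: "SP k (\<lambda>fs. (e = list_encode [7, (length as), k] \<and> (length as) \<ge> 1 \<and> k \<ge> 1 \<and> b = (fs ! 0) (as ! 0)))"
    proof (intro SP_conj_imp)
    assume "k \<ge> 1"
    then show "SP k (\<lambda>fs. b = (fs ! 0) (as ! 0))" using SP_coord[of k "\<lambda>v. b = v" "as ! 0"] by simp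
  qed
  have d10: "SP k (\<lambda>fs. (\<exists>e1 g. e = list_encode [8, (length as), k, e1] \<and> (\<forall>t. Q (e1, t # as, fs, g t)) \<and> b = Sfun g))"
    proof (rule SP_cong)
    show "SP k (\<lambda>fs. \<exists>e1. e = list_encode [8, (length as), k, e1] \<and> (\<exists>g. (\<forall>t. Q (e1, t # as, fs, g t)) \<and> b = Sfun g))"
      by (intro SP_ex SP_conj_imp SP_S8[OF H1 H2])
  qed blast
  have d11: "SP k (\<lambda>fs. (\<exists>m d as'. e = list_encode [9, (length as), k, m] \<and> as = d # as' \<and> m \<le> length as' \<and>
        Q (d, take m as', fs, b)))"
    by (intro SP_ex SP_conj_imp H1)
  have all: "SP k (\<lambda>fs. (e = list_encode [1, (length as), k] \<and> (length as) \<ge> 1 \<and> b = Suc (as ! 0)) \<or> (\<exists>q. e = list_encode [2, (length as), k, q] \<and> b = q) \<or> (e = list_encode [3, (length as), k] \<and> (length as) \<ge> 1 \<and> b = as ! 0) \<or> (\<exists>e1 e2 c. e = list_encode [4, (length as), k, e1, e2] \<and>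
        Q (e2, as, fs, c) \<and> Q (e1, c # as, fs, b)) \<or> (\<exists>e1 e2 as'. e = list_encode [5, (length as), k, e1, e2] \<and> as = 0 # as' \<and> Q (e1, as', fs, b)) \<or> (\<exists>e1 e2 m as' c. e = list_encode [5, (length as), k, e1, e2] \<and> as = Suc m # as' \<and>
        Q (e, m # as', fs, c) \<and> Q (e2, c # m # as', fs, b)) \<or> (\<exists>i j e1. e = list_encode [6, (length as), k, 0, i, j, e1] \<and> i < (length as) \<and> j < (length as) \<and>
        Q (e1, swap_list i j as, fs, b)) \<or> (\<exists>i j e1. e = list_encode [6, (length as), k, 1, i, j, e1] \<and> i < k \<and> j < k \<and>
        Q (e1, as, swap_list i j fs, b)) \<or> (e = list_encode [7, (length as), k] \<and> (length as) \<ge> 1 \<and> k \<ge> 1 \<and> b = (fs ! 0) (as ! 0)) \<or> (\<exists>e1 g. e = list_encode [8, (length as), k, e1] \<and> (\<forall>t. Q (e1, t # as, fs, g t)) \<and> b = Sfun g) \<or> (\<exists>m d as'. e = list_encode [9, (length as), k, m] \<and> as = d # as' \<and> m \<le> length as' \<and>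
        Q (d, take m as', fs, b)))"
    by (intro SP_or d1 d2 d3 d4 d5 d6 d7 d8 d9 d10 d11)
  show ?thesis
  proof (rule SP_cong[OF _ all])
    fix fs assume "fs \<in> space k"
    then have lf: "length fs = k" by (simp add: space_def)
    show "step Q (e,as,fs,b) = ((e = list_encode [1, (length as), k] \<and> (length as) \<ge> 1 \<and> b = Suc (as ! 0)) \<or> (\<exists>q. e = list_encode [2, (length as), k, q] \<and> b = q) \<or> (e = list_encode [3, (length as), k] \<and> (length as) \<ge> 1 \<and> b = as ! 0) \<or> (\<exists>e1 e2 c. e = list_encode [4, (length as), k, e1, e2] \<and>
        Q (e2, as, fs, c) \<and> Q (e1, c # as, fs, b)) \<or> (\<exists>e1 e2 as'. e = list_encode [5, (length as), k, e1, e2] \<and> as = 0 # as' \<and> Q (e1, as', fs, b)) \<or> (\<exists>e1 e2 m as' c. e = list_encode [5, (length as), k, e1, e2] \<and> as = Suc m # as' \<and>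
        Q (e, m # as', fs, c) \<and> Q (e2, c # m # as', fs, b)) \<or> (\<exists>i j e1. e = list_encode [6, (length as), k, 0, i, j, e1] \<and> i < (length as) \<and> j < (length as) \<and>
        Q (e1, swap_list i j as, fs, b)) \<or> (\<exists>i j e1. e = list_encode [6, (length as), k, 1, i, j, e1] \<and> i < k \<and> j < k \<and>
        Q (e1, as, swap_list i j fs, b)) \<or> (e = list_encode [7, (length as), k] \<and> (length as) \<ge> 1 \<and> k \<ge> 1 \<and> b = (fs ! 0) (as ! 0)) \<or> (\<exists>e1 g. e = list_encode [8, (length as), k, e1] \<and> (\<forall>t. Q (e1, t # as, fs, g t)) \<and> b = Sfun g) \<or> (\<exists>m d as'. e = list_encode [9, (length as), k, m] \<and> as = d # as' \<and> m \<le> length as' \<and>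
        Q (d, take m as', fs, b)))"
      unfolding step_def Let_def prod.case by (simp only: lf)
  qed
qed

lemma rank_SP:
  assumes W: "Well_order \<alpha>"
  shows "\<forall>e as b. SP k (\<lambda>fs. comp_rank_le \<alpha> \<xi> (e,as,fs,b))"
proof (induction \<xi> rule: wf_induct[OF wo_wf[OF W]])
  case (1 \<xi>)
  define Q where "Q y \<longleftrightarrow> (\<exists>\<eta>. (\<eta>, \<xi>) \<in> \<alpha> \<and> \<eta> \<noteq> \<xi> \<and> comp_rank_le \<alpha> \<eta> y)" for y
  have eqv: "comp_rank_le \<alpha> \<xi> x \<longleftrightarrow> \<xi> \<in> Field \<alpha> \<and> step Q x" for x
  proof
    assume "comp_rank_le \<alpha> \<xi> x"
    then show "\<xi> \<in> Field \<alpha> \<and> step Q x" unfolding Q_def by (cases rule: comp_rank_le.cases) auto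
  next
    assume "\<xi> \<in> Field \<alpha> \<and> step Q x"
    then show "comp_rank_le \<alpha> \<xi> x" unfolding Q_def by (intro comp_rank_le.intros) auto
  qed
  have H1: "SP k (\<lambda>fs. Q (e,as,fs,b))" for e as b
    unfolding Q_def
  proof (intro SP_ex SP_conj_imp)
    fix \<eta> assume "(\<eta>, \<xi>) \<in> \<alpha>" "\<eta> \<noteq> \<xi>"
    then have "(\<eta>, \<xi>) \<in> \<alpha> - Id" by simp
    then show "SP k (\<lambda>fs. comp_rank_le \<alpha> \<eta> (e, as, fs, b))" using 1 by blast
  qed
  have H2: "c = c'" if "Q (e,as,fs,c)" "Q (e,as,fs,c')" for e as fs c c'
  proof -
    have "omegaS (e,as,fs,c)" "omegaS (e,as,fs,c')" using that rank_omega unfolding Q_def by blast+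
    then show ?thesis using omega_det by metis
  qed
  show ?case
  proof (intro allI)
    fix e as b
    have "SP k (\<lambda>fs. \<xi> \<in> Field \<alpha> \<and> step Q (e,as,fs,b))"
      by (intro SP_conj_imp SP_step[OF H1 H2])
    then show "SP k (\<lambda>fs. comp_rank_le \<alpha> \<xi> (e,as,fs,b))" unfolding eqv .
  qed
qed

theorem theorem3p2:
  fixes \<alpha> :: "nat rel" and e k b :: nat and as :: "nat list"
  assumes "Well_order \<alpha>"
  shows "suslin_set k {fs \<in> space k. norm_less \<alpha> (e, as, fs, b)}"
proof -
  have "SP k (\<lambda>fs. \<exists>\<xi>. \<xi> \<in> Field \<alpha> \<and> comp_rank_le \<alpha> \<xi> (e,as,fs,b))"
    using rank_SP[OF assms] by (intro SP_ex SP_conj_imp) blast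
  moreover have "norm_less \<alpha> (e, as, fs, b) \<longleftrightarrow> (\<exists>\<xi>. \<xi> \<in> Field \<alpha> \<and> comp_rank_le \<alpha> \<xi> (e,as,fs,b))" for fs
    unfolding norm_less_def using rank_omega by blast
  ultimately show ?thesis unfolding SP_def by simp
qed

end
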